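(* Let $p\in(1,\infty]$ and $\lambda>0$. Every metric space with property $\lambda$-HIC$_p$ has property $\lambda$-HC$_p$, and every metric space with property $\lambda$-HC$_p$ has property $2\lambda$-HIC$_p$. In particular, properties HC$_p$ and HIC$_p$ are equivalent.
   Context: For infinite $\mathbb M\subseteq\mathbb N$ and $k\in\mathbb N$, $[\mathbb M]^k$ is the set of $\bar n=(n_1,\dots,n_k)\in\mathbb M^k$ with $n_1<\dots<n_k$, with Hamming distance $d_{\mathbb H}(\bar n,\bar m)=|\{j:n_j\ne m_j\}|$; $I_k(\mathbb M)=\{(\bar n,\bar m)\in([\mathbb M]^k)^2: n_1<m_1<n_2<m_2<\dots<n_k<m_k\}$. Convention $1/\infty=0$. For a metric space $(M,d)$, $p\in(1,\infty]$, $\lambda>0$: $M$ has $\lambda$-HIC$_p$ if for every $k\in\mathbb N$ and every Lipschitz $f:([\mathbb N]^k,d_{\mathbb H})\to M$ there is $(\bar n,\bar m)\in I_k(\mathbb N)$ with $d(f(\bar n),f(\bar m))\le\lambda k^{1/p}\mathrm{Lip}(f)$. $M$ has $\lambda$-HC$_p$ if for every $k$ and every such $f$ there are $\bar n,\bar m\in[\mathbb N]^k$ with $\bar n\cap\bar m=\varnothing$ (as sets) and $d(f(\bar n),f(\bar m))\le\lambda k^{1/p}\mathrm{Lip}(f)$. HC$_p$ (resp. HIC$_p$) means $\lambda$-HC$_p$ (resp. $\lambda$-HIC$_p$) for some $\lambda>0$. *)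

theory Defs
  imports "HOL-Analysis.Analysis"
begin

definition incr_tuples :: "nat \<Rightarrow> nat list set" where
  "incr_tuples k = {xs. length xs = k \<and> sorted_wrt (<) xs}"

definition hamming :: "nat list \<Rightarrow> nat list \<Rightarrow> nat" where
  "hamming xs ys = card {j. j < length xs \<and> xs ! j \<noteq> ys ! j}"

definition interlaced :: "nat \<Rightarrow> nat list \<Rightarrow> nat list \<Rightarrow> bool" where
  "interlaced k xs ys \<longleftrightarrow> xs \<in> incr_tuples k \<and> ys \<in> incr_tuples k \<and>
     (\<forall>j<k. xs ! j < ys ! j) \<and> (\<forall>j. Suc j < k \<longrightarrow> ys ! j < xs ! Suc j)"

definition tuple_lipschitz :: "'a set \<Rightarrow> ('a \<Rightarrow> 'a \<Rightarrow> real) \<Rightarrow> nat \<Rightarrow> (nat list \<Rightarrow> 'a) \<Rightarrow> bool" where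
  "tuple_lipschitz M d k f \<longleftrightarrow> f ` incr_tuples k \<subseteq> M \<and>
     (\<exists>L. \<forall>xs\<in>incr_tuples k. \<forall>ys\<in>incr_tuples k. d (f xs) (f ys) \<le> L * real (hamming xs ys))"

definition tuple_lip :: "('a \<Rightarrow> 'a \<Rightarrow> real) \<Rightarrow> nat \<Rightarrow> (nat list \<Rightarrow> 'a) \<Rightarrow> real" where
  "tuple_lip d k f = Sup {d (f xs) (f ys) / real (hamming xs ys) | xs ys.
      xs \<in> incr_tuples k \<and> ys \<in> incr_tuples k \<and> xs \<noteq> ys}"

text \<open>Exponent 1/p with the convention 1/\<infinity> = 0.\<close>
definition inv_exp :: "ereal \<Rightarrow> real" where
  "inv_exp p = real_of_ereal (1 / p)"

definition HIC :: "ereal \<Rightarrow> real \<Rightarrow> 'a set \<Rightarrow> ('a \<Rightarrow> 'a \<Rightarrow> real) \<Rightarrow> bool" where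
  "HIC p lam M d \<longleftrightarrow> (\<forall>k\<ge>1. \<forall>f. tuple_lipschitz M d k f \<longrightarrow>
     (\<exists>xs ys. interlaced k xs ys \<and>
        d (f xs) (f ys) \<le> lam * real k powr inv_exp p * tuple_lip d k f))"

definition HC :: "ereal \<Rightarrow> real \<Rightarrow> 'a set \<Rightarrow> ('a \<Rightarrow> 'a \<Rightarrow> real) \<Rightarrow> bool" where
  "HC p lam M d \<longleftrightarrow> (\<forall>k\<ge>1. \<forall>f. tuple_lipschitz M d k f \<longrightarrow>
     (\<exists>xs ys. xs \<in> incr_tuples k \<and> ys \<in> incr_tuples k \<and> set xs \<inter> set ys = {} \<and>
        d (f xs) (f ys) \<le> lam * real k powr inv_exp p * tuple_lip d k f))"

end

theory Submission imports Defs "HOL-Library.Ramsey" begin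

definition pos_sub :: "nat list \<Rightarrow> nat set \<Rightarrow> nat list" where
  "pos_sub s Q = map (nth s) (filter (\<lambda>i. i \<in> Q) [0..<length s])"

lemma sls_strict: "sorted_wrt (<) (sorted_list_of_set (A::nat set))"
  using strict_sorted_list_of_set[of A] by simp

lemma sls_image:
  assumes "strict_mono (\<phi>::nat\<Rightarrow>nat)" "finite S"
  shows "sorted_list_of_set (\<phi> ` S) = map \<phi> (sorted_list_of_set S)"
proof -
  have a: "sorted_wrt (<) (map \<phi> (sorted_list_of_set S))"
    using sls_strict[of S] assms(1) by (simp add: sorted_wrt_map sorted_wrt_mono_rel strict_mono_less)
  have b: "set (map \<phi> (sorted_list_of_set S)) = set (sorted_list_of_set (\<phi> ` S))"
    using assms(2) by simp
  show ?thesis by (rule sym, rule strict_sorted_equal[OF sls_strict a b])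
qed

lemma pos_sub_map: "pos_sub (map \<phi> s) Q = map \<phi> (pos_sub s Q)"
  by (simp add: pos_sub_def)

lemma pos_sub_filter: "pos_sub s {i. i < length s \<and> P (s ! i)} = filter P s"
proof -
  have f1: "filter P s = map (nth s) (filter (P \<circ> nth s) [0..<length s])"
    by (metis filter_map map_nth)
  have f2: "filter (\<lambda>i. i \<in> {i. i < length s \<and> P (s ! i)}) [0..<length s] = filter (P \<circ> nth s) [0..<length s]"
    by (rule filter_cong) auto
  show ?thesis by (simp only: pos_sub_def f1 f2)
qed

lemma pos_sub_filter2: "pos_sub s (- {i. i < length s \<and> P (s ! i)}) = filter (\<lambda>t. \<not> P t) s"
proof -
  have f2: "filter (\<lambda>i. i \<in> - {i. i < length s \<and> P (s ! i)}) [0..<length s]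
      = filter (\<lambda>i. i \<in> {i. i < length s \<and> \<not> P (s ! i)}) [0..<length s]"
    by (rule filter_cong) auto
  have "pos_sub s (- {i. i < length s \<and> P (s ! i)}) = pos_sub s {i. i < length s \<and> \<not> P (s ! i)}"
    by (simp only: pos_sub_def f2)
  also have "\<dots> = filter (\<lambda>t. \<not> P t) s" by (rule pos_sub_filter)
  finally show ?thesis .
qed

lemma split_pair:
  assumes x: "sorted_wrt (<) x" and y: "sorted_wrt (<) y" and dj: "set x \<inter> set y = {}"
  defines "s \<equiv> sorted_list_of_set (set x \<union> set y)"
  shows "pos_sub s {i. i < length s \<and> s ! i \<in> set x} = x"
    and "pos_sub s (- {i. i < length s \<and> s ! i \<in> set x}) = y"
proof -
  have ss: "sorted_wrt (<) s" unfolding s_def by (rule sls_strict)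
  have sets: "set s = set x \<union> set y" unfolding s_def by simp
  have s1: "sorted_wrt (<) (filter (\<lambda>t. t \<in> set x) s)" using ss by (rule sorted_wrt_filter)
  have s2: "sorted_wrt (<) (filter (\<lambda>t. t \<notin> set x) s)" using ss by (rule sorted_wrt_filter)
  have e1: "set (filter (\<lambda>t. t \<in> set x) s) = set x" using sets by auto
  have e2: "set (filter (\<lambda>t. t \<notin> set x) s) = set y" using sets dj by auto
  show "pos_sub s {i. i < length s \<and> s ! i \<in> set x} = x"
    using pos_sub_filter[of s "\<lambda>t. t \<in> set x"] strict_sorted_equal[OF x s1 e1] by simp
  show "pos_sub s (- {i. i < length s \<and> s ! i \<in> set x}) = y"
    using pos_sub_filter2[of s "\<lambda>t. t \<in> set x"] strict_sorted_equal[OF y s2 e2] by simp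
qed

lemma interlaced_disj:
  assumes "interlaced k xs ys" shows "set xs \<inter> set ys = {}"
proof (rule ccontr)
  assume "set xs \<inter> set ys \<noteq> {}"
  then obtain v where v: "v \<in> set xs" "v \<in> set ys" by blast
  have sx: "sorted_wrt (<) xs" "length xs = k" and sy: "sorted_wrt (<) ys" "length ys = k"
    and lt1: "\<forall>j<k. xs ! j < ys ! j" and lt2: "\<forall>j. Suc j < k \<longrightarrow> ys ! j < xs ! Suc j"
    using assms unfolding interlaced_def incr_tuples_def by auto
  obtain i where i: "i < k" "xs ! i = v" using v(1) sx(2) by (auto simp: in_set_conv_nth)
  obtain j where j: "j < k" "ys ! j = v" using v(2) sy(2) by (auto simp: in_set_conv_nth)
  show False
  proof (cases "i \<le> j")
    case True
    have "xs ! i \<le> xs ! j"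
    proof (cases "i = j")
      case False
      then have "i < j" using True by simp
      then show ?thesis using sorted_wrt_nth_less[OF sx(1), of i j] j(1) sx(2) by simp
    qed simp
    moreover have "xs ! j < ys ! j" using lt1 j(1) by blast
    ultimately show False using i j by simp
  next
    case False
    then have sj: "Suc j < k" using i(1) by simp
    then have "ys ! j < xs ! Suc j" using lt2 by blast
    moreover have "xs ! Suc j \<le> xs ! i"
    proof (cases "Suc j = i")
      case False
      then have "Suc j < i" using \<open>\<not> i \<le> j\<close> by simp
      then show ?thesis using sorted_wrt_nth_less[OF sx(1), of "Suc j" i] i(1) sx(2) by simp
    qed simp
    ultimately show False using i j by simp
  qed
qed

lemma map_incr: "strict_mono (\<phi>::nat\<Rightarrow>nat) \<Longrightarrow> xs \<in> incr_tuples k \<Longrightarrow> map \<phi> xs \<in> incr_tuples k"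
  by (auto simp: incr_tuples_def sorted_wrt_map strict_mono_less elim: sorted_wrt_mono_rel[rotated])

lemma hamming_map: "strict_mono (\<phi>::nat\<Rightarrow>nat) \<Longrightarrow> length xs = length ys \<Longrightarrow>
    hamming (map \<phi> xs) (map \<phi> ys) = hamming xs ys"
  unfolding hamming_def by (intro arg_cong[where f=card] Collect_cong) (auto simp: strict_mono_eq)

lemma hamming_pos: "length xs = length ys \<Longrightarrow> xs \<noteq> ys \<Longrightarrow> hamming xs ys > 0"
  unfolding hamming_def
proof -
  assume a: "length xs = length ys" "xs \<noteq> ys"
  then obtain j where "j < length xs" "xs ! j \<noteq> ys ! j" using nth_equalityI by blast
  then show "0 < card {j. j < length xs \<and> xs ! j \<noteq> ys ! j}"
    by (subst card_gt_0_iff) auto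
qed

definition ratios :: "('a \<Rightarrow> 'a \<Rightarrow> real) \<Rightarrow> nat \<Rightarrow> (nat list \<Rightarrow> 'a) \<Rightarrow> real set" where
  "ratios d k f = {d (f xs) (f ys) / real (hamming xs ys) | xs ys.
      xs \<in> incr_tuples k \<and> ys \<in> incr_tuples k \<and> xs \<noteq> ys}"

lemma tuple_lip_ratios: "tuple_lip d k f = Sup (ratios d k f)"
  unfolding tuple_lip_def ratios_def ..

lemma ratios_bdd: assumes "tuple_lipschitz M d k f" shows "bdd_above (ratios d k f)"
proof -
  obtain L where L: "\<forall>xs\<in>incr_tuples k. \<forall>ys\<in>incr_tuples k. d (f xs) (f ys) \<le> L * real (hamming xs ys)"
    using assms unfolding tuple_lipschitz_def by blast
  show ?thesis unfolding bdd_above_def ratios_def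
  proof (intro exI ballI)
    fix r assume "r \<in> {d (f xs) (f ys) / real (hamming xs ys) | xs ys.
      xs \<in> incr_tuples k \<and> ys \<in> incr_tuples k \<and> xs \<noteq> ys}"
    then obtain xs ys where r: "r = d (f xs) (f ys) / real (hamming xs ys)" "xs \<in> incr_tuples k"
      "ys \<in> incr_tuples k" "xs \<noteq> ys" by blast
    have "hamming xs ys > 0" using r hamming_pos by (auto simp: incr_tuples_def)
    then show "r \<le> L" using r L by (simp add: divide_le_eq mult.commute)
  qed
qed

lemma ratios_ne: assumes "k \<ge> 1" shows "ratios d k f \<noteq> {}"
proof -
  have "[0..<k] \<in> incr_tuples k" "[1..<k+1] \<in> incr_tuples k"
    by (auto simp: incr_tuples_def sorted_wrt_iff_nth_less simp del: upt_Suc)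
  moreover have "[0..<k] \<noteq> [1..<k+1]"
  proof -
    have "(0::nat) \<in> set [0..<k]" using assms by simp
    moreover have "(0::nat) \<notin> set [1..<k+1]" by simp
    ultimately show ?thesis by metis
  qed
  ultimately show ?thesis unfolding ratios_def by blast
qed

lemma lip_comp:
  assumes e: "strict_mono (e::nat\<Rightarrow>nat)" and k: "k \<ge> 1" and f: "tuple_lipschitz M d k f"
  shows "tuple_lipschitz M d k (\<lambda>xs. f (map e xs))" "tuple_lip d k (\<lambda>xs. f (map e xs)) \<le> tuple_lip d k f"
proof -
  obtain L where L: "\<forall>xs\<in>incr_tuples k. \<forall>ys\<in>incr_tuples k. d (f xs) (f ys) \<le> L * real (hamming xs ys)"
    and im: "f ` incr_tuples k \<subseteq> M"
    using f unfolding tuple_lipschitz_def by blast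
  show "tuple_lipschitz M d k (\<lambda>xs. f (map e xs))"
    unfolding tuple_lipschitz_def
  proof (intro conjI exI ballI)
    show "(\<lambda>xs. f (map e xs)) ` incr_tuples k \<subseteq> M" using im map_incr[OF e] by blast
    fix xs ys assume "xs \<in> incr_tuples k" "ys \<in> incr_tuples k"
    then show "d (f (map e xs)) (f (map e ys)) \<le> L * real (hamming xs ys)"
      using L[rule_format, of "map e xs" "map e ys"] map_incr[OF e] hamming_map[OF e, of xs ys]
      by (auto simp: incr_tuples_def)
  qed
  have sub: "ratios d k (\<lambda>xs. f (map e xs)) \<subseteq> ratios d k f"
  proof
    fix r assume "r \<in> ratios d k (\<lambda>xs. f (map e xs))"
    then obtain xs ys where r: "r = d (f (map e xs)) (f (map e ys)) / real (hamming xs ys)" "xs \<in> incr_tuples k"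
      "ys \<in> incr_tuples k" "xs \<noteq> ys" unfolding ratios_def by blast
    have "map e xs \<noteq> map e ys" using r(4) e by (simp add: strict_mono_eq inj_on_def list.inj_map_strong)
    moreover have "r = d (f (map e xs)) (f (map e ys)) / real (hamming (map e xs) (map e ys))"
      using r hamming_map[OF e, of xs ys] by (auto simp: incr_tuples_def)
    ultimately show "r \<in> ratios d k f" unfolding ratios_def using r map_incr[OF e] by blast
  qed
  show "tuple_lip d k (\<lambda>xs. f (map e xs)) \<le> tuple_lip d k f"
    unfolding tuple_lip_ratios by (rule cSup_subset_mono[OF ratios_ne[OF k] ratios_bdd[OF f] sub])
qed

lemma HIC_imp_HC: "HIC p lam M d \<Longrightarrow> HC p lam M d"
  unfolding HIC_def HC_def
proof (intro allI impI)
  fix k f assume H: "\<forall>k\<ge>1. \<forall>f. tuple_lipschitz M d k f \<longrightarrow>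
     (\<exists>xs ys. interlaced k xs ys \<and> d (f xs) (f ys) \<le> lam * real k powr inv_exp p * tuple_lip d k f)"
    and k: "1 \<le> k" and f: "tuple_lipschitz M d k f"
  then obtain xs ys where "interlaced k xs ys" "d (f xs) (f ys) \<le> lam * real k powr inv_exp p * tuple_lip d k f"
    by blast
  then show "\<exists>xs ys. xs \<in> incr_tuples k \<and> ys \<in> incr_tuples k \<and> set xs \<inter> set ys = {} \<and>
        d (f xs) (f ys) \<le> lam * real k powr inv_exp p * tuple_lip d k f"
    using interlaced_disj unfolding interlaced_def by blast
qed

lemma HC_imp_HIC:
  assumes lam: "lam > 0" and ms: "Metric_space M d" and hc: "HC p lam M d"
  shows "HIC p (2 * lam) M d"
  unfolding HIC_def
proof (intro allI impI)
  fix k f assume k: "1 \<le> k" and f: "tuple_lipschitz M d k f"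
  define L where "L = tuple_lip d k f"
  define \<delta> where "\<delta> = lam * real k powr inv_exp p * L"
  define u where "u S Q = pos_sub (sorted_list_of_set S) Q" for S Q
  define col where "col S = {Q. Q \<subseteq> {..<2*k} \<and> d (f (u S Q)) (f (u S (-Q))) \<le> \<delta>}" for S
  define F where "F = Pow (Pow {..<2*k})"
  have finF: "finite F" unfolding F_def by simp
  obtain h where h: "bij_betw h F {0..<card F}" using ex_bij_betw_finite_nat[OF finF] by blast
  have colF: "col S \<in> F" for S unfolding col_def F_def by auto
  have "\<exists>Y t. Y \<subseteq> (UNIV::nat set) \<and> infinite Y \<and> t < card F
            \<and> (\<forall>X. X \<subseteq> Y \<and> finite X \<and> card X = 2*k \<longrightarrow> (h \<circ> col) X = t)"
  proof (rule Ramsey)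
    show "infinite (UNIV::nat set)" by simp
    show "\<forall>X. X \<subseteq> UNIV \<and> finite X \<and> card X = 2 * k \<longrightarrow> (h \<circ> col) X < card F"
      using bij_betwE[OF h] colF by fastforce
  qed
  then obtain Y t where Y: "infinite Y" and hom0: "\<And>X. X \<subseteq> Y \<Longrightarrow> finite X \<Longrightarrow> card X = 2*k \<Longrightarrow> h (col X) = t"
    by auto
  have hom: "col X = col X'" if "X \<subseteq> Y" "finite X" "card X = 2*k" "X' \<subseteq> Y" "finite X'" "card X' = 2*k" for X X'
  proof -
    have "h (col X) = h (col X')" using hom0 that by metis
    then show ?thesis using h colF unfolding bij_betw_def inj_on_def by blast
  qed
  define e where "e = enumerate Y"
  have e: "strict_mono e" unfolding e_def using Y by (simp add: strict_mono_def enumerate_mono)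
  have eY: "e n \<in> Y" for n unfolding e_def using Y by (rule enumerate_in_set)
  obtain g where g: "g = (\<lambda>xs. f (map e xs))" by blast
  have lg: "tuple_lipschitz M d k g" "tuple_lip d k g \<le> L"
    using lip_comp[OF e k f] unfolding g L_def by auto
  obtain x y where xy: "x \<in> incr_tuples k" "y \<in> incr_tuples k" "set x \<inter> set y = {}"
    "d (g x) (g y) \<le> lam * real k powr inv_exp p * tuple_lip d k g"
    using hc k lg(1) unfolding HC_def by blast
  have "lam * real k powr inv_exp p * tuple_lip d k g \<le> \<delta>"
    unfolding \<delta>_def using lg(2) lam by (intro mult_left_mono) auto
  with xy have dg: "d (f (map e x)) (f (map e y)) \<le> \<delta>" unfolding g by simp
  have sx: "sorted_wrt (<) x" "length x = k" and sy: "sorted_wrt (<) y" "length y = k"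
    using xy unfolding incr_tuples_def by auto
  define S0 where "S0 = set x \<union> set y"
  have finS0: "finite S0" unfolding S0_def by simp
  have cardS0: "card S0 = 2*k" unfolding S0_def
  proof -
    have "distinct x" "distinct y" using sx(1) sy(1) strict_sorted_iff by auto
    then have "card (set x) = k" "card (set y) = k" using sx(2) sy(2) distinct_card by metis+
    then show "card (set x \<union> set y) = 2*k" using card_Un_disjoint[OF _ _ xy(3)] by simp
  qed
  define s where "s = sorted_list_of_set S0"
  define Q where "Q = {i. i < length s \<and> s ! i \<in> set x}"
  have lens: "length s = 2*k" unfolding s_def using cardS0 by simp
  have Qsub: "Q \<subseteq> {..<2*k}" unfolding Q_def using lens by auto
  have sp: "pos_sub s Q = x" "pos_sub s (-Q) = y"
    using split_pair[OF sx(1) sy(1) xy(3)] unfolding s_def S0_def Q_def by auto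
  have key: "u (\<phi> ` S0) Q = map \<phi> x \<and> u (\<phi> ` S0) (-Q) = map \<phi> y \<and> col (\<phi> ` S0) = col (e ` S0)"
    if \<phi>: "strict_mono \<phi>" "\<And>n. \<phi> n \<in> Y" for \<phi>
  proof -
    have "u (\<phi> ` S0) R = map \<phi> (pos_sub s R)" for R
      unfolding u_def s_def by (simp add: sls_image[OF \<phi>(1) finS0] pos_sub_map)
    moreover have cd: "card (\<psi> ` S0) = 2*k" if "strict_mono \<psi>" for \<psi>
      using card_image[OF inj_on_subset[OF strict_mono_imp_inj_on[OF that] subset_UNIV]] cardS0 by simp
    moreover have "\<phi> ` S0 \<subseteq> Y" "e ` S0 \<subseteq> Y" using \<phi>(2) eY by auto
    moreover have "col (\<phi> ` S0) = col (e ` S0)"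
      using hom[of "\<phi> ` S0" "e ` S0"] cd[OF \<phi>(1)] cd[OF e] finS0 calculation(3,4) by simp
    ultimately show ?thesis using sp by simp
  qed
  have "Q \<in> col (e ` S0)"
  proof -
    have "u (e ` S0) Q = map e x" "u (e ` S0) (-Q) = map e y" using key[OF e eY] by auto
    then show ?thesis using dg Qsub unfolding col_def by simp
  qed
  then have close: "d (f (map \<phi> x)) (f (map \<phi> y)) \<le> \<delta>"
    if \<phi>: "strict_mono \<phi>" "\<And>n. \<phi> n \<in> Y" for \<phi>
  proof -
    have "u (\<phi> ` S0) Q = map \<phi> x" "u (\<phi> ` S0) (-Q) = map \<phi> y" "Q \<in> col (\<phi> ` S0)"
      using key[OF \<phi>] \<open>Q \<in> col (e ` S0)\<close> by auto
    then show ?thesis unfolding col_def by simp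
  qed
  define \<phi>a where "\<phi>a t = e (3*t)" for t
  define \<phi>b where "\<phi>b t = (if t \<in> set x then e (3*t+1) else e (3*t))" for t
  have \<phi>a: "strict_mono \<phi>a" unfolding \<phi>a_def using e by (simp add: strict_mono_def)
  have \<phi>b: "strict_mono \<phi>b"
  proof (rule strict_monoI_Suc)
    fix n
    have "\<phi>b n \<le> e (3*n+1)" unfolding \<phi>b_def using e by (simp add: strict_mono_less_eq)
    also have "\<dots> < e (3 * Suc n)" using e by (simp add: strict_mono_less)
    also have "\<dots> \<le> \<phi>b (Suc n)" unfolding \<phi>b_def using e by (simp add: strict_mono_less_eq)
    finally show "\<phi>b n < \<phi>b (Suc n)" .
  qed
  define a where "a = map \<phi>a x"
  define b where "b = map (\<lambda>t. e (3*t+1)) x"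
  define c where "c = map \<phi>a y"
  have b_eq: "map \<phi>b x = b" unfolding b_def \<phi>b_def by simp
  have c_eq: "map \<phi>b y = c" unfolding c_def \<phi>b_def \<phi>a_def using xy(3) by auto
  have \<phi>aY: "\<phi>a n \<in> Y" for n unfolding \<phi>a_def by (rule eY)
  have \<phi>bY: "\<phi>b n \<in> Y" for n unfolding \<phi>b_def using eY by simp
  have dac: "d (f a) (f c) \<le> \<delta>" unfolding a_def c_def
    by (rule close[OF \<phi>a \<phi>aY])
  have dbc: "d (f b) (f c) \<le> \<delta>"
    using close[OF \<phi>b \<phi>bY] b_eq c_eq by simp
  have eb: "strict_mono (\<lambda>t. e (3*t+1))" using e by (simp add: strict_mono_def)
  have ai: "a \<in> incr_tuples k" unfolding a_def using map_incr[OF \<phi>a xy(1)] .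
  have bi: "b \<in> incr_tuples k" unfolding b_def using map_incr[OF eb xy(1)] .
  have ci: "c \<in> incr_tuples k" unfolding c_def using map_incr[OF \<phi>a xy(2)] .
  have il: "interlaced k a b"
    unfolding interlaced_def
  proof (intro conjI allI impI ai bi)
    fix j assume "j < k"
    then show "a ! j < b ! j" unfolding a_def b_def \<phi>a_def using sx e by (simp add: strict_mono_less)
  next
    fix j assume j: "Suc j < k"
    then have "x ! j < x ! Suc j" using sx sorted_wrt_nth_less[OF sx(1), of j "Suc j"] by simp
    then show "b ! j < a ! Suc j" unfolding a_def b_def \<phi>a_def using sx e j by (simp add: strict_mono_less)
  qed
  have inM: "f a \<in> M" "f b \<in> M" "f c \<in> M" using f ai bi ci unfolding tuple_lipschitz_def by auto
  have "d (f a) (f b) \<le> d (f a) (f c) + d (f c) (f b)"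
    using Metric_space.triangle[OF ms inM(1) inM(3) inM(2)] .
  also have "\<dots> \<le> 2 * \<delta>" using dac dbc Metric_space.commute[OF ms, of "f c" "f b"] by simp
  finally show "\<exists>xs ys. interlaced k xs ys \<and>
        d (f xs) (f ys) \<le> 2 * lam * real k powr inv_exp p * tuple_lip d k f"
    using il unfolding \<delta>_def L_def by (intro exI[of _ a] exI[of _ b]) (simp add: mult.assoc)
qed

theorem proposition2:
  fixes p :: ereal and lam :: real and M :: "'a set" and d :: "'a \<Rightarrow> 'a \<Rightarrow> real"
  assumes "1 < p" and "lam > 0" and "Metric_space M d"
  shows "(HIC p lam M d \<longrightarrow> HC p lam M d)
       \<and> (HC p lam M d \<longrightarrow> HIC p (2 * lam) M d)
       \<and> ((\<exists>l>0. HC p l M d) \<longleftrightarrow> (\<exists>l>0. HIC p l M d))"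
proof (intro conjI impI)
  show "HIC p lam M d \<Longrightarrow> HC p lam M d" by (rule HIC_imp_HC)
  show "HC p lam M d \<Longrightarrow> HIC p (2 * lam) M d" using HC_imp_HIC assms by blast
  show "(\<exists>l>0. HC p l M d) \<longleftrightarrow> (\<exists>l>0. HIC p l M d)"
  proof
    assume "\<exists>l>0. HC p l M d"
    then obtain l where "l > 0" "HC p l M d" by blast
    then show "\<exists>l>0. HIC p l M d" using HC_imp_HIC[of l M d p] assms(3) by (intro exI[of _ "2*l"]) auto
  next
    assume "\<exists>l>0. HIC p l M d"
    then show "\<exists>l>0. HC p l M d" using HIC_imp_HC by blast
  qed
qed

end
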